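(* For every $A \in S(2n,\mathbb{R})$ and every $P \in \operatorname{Sp}(2n)$, $\operatorname{Pf}(P^T A P) = \operatorname{Pf}(A)$ and $\operatorname{s}(P^T A P) = \operatorname{s}(A)$; i.e. the Pfaffian and the sum function are invariant under the action $\rho(P,A) = P^T A P$.
   Context: $S(2n,\mathbb{R}) = \{A \in M(2n,\mathbb{R}) : A^T = -A,\ \det A\neq 0\}$. $J$ is the $2n\times 2n$ block-diagonal matrix with $n$ diagonal blocks $J_0 = \begin{bmatrix} 0 & 1 \\ -1 & 0\end{bmatrix}$, and $\operatorname{Sp}(2n) = \{P\in M(2n,\mathbb{R}) : P^T J P = J\}$. $\operatorname{Pf}(A) = \frac{1}{2^n n!}\sum_{\sigma\in S_{2n}}\operatorname{sgn}(\sigma)\prod_{i=1}^n A_{\sigma(2i-1),\sigma(2i)}$, and $\operatorname{s}(A) = \sum_{i=1}^n A_{2i-1,2i}$. *)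

theory Defs
  imports "Jordan_Normal_Form.Determinant"
begin

text \<open>Matrices are indexed from 0. The 2n x 2n matrix J is block diagonal with
  n blocks [[0,1],[-1,0]]: J(2i,2i+1) = 1, J(2i+1,2i) = -1, all other entries 0.\<close>

definition Jsymp :: "nat \<Rightarrow> real mat" where
  "Jsymp n = mat (2*n) (2*n) (\<lambda>(i,j).
     if even i \<and> j = i + 1 then 1 else if odd i \<and> i = j + 1 then -1 else 0)"

definition skew_nonsing :: "nat \<Rightarrow> real mat set" where
  "skew_nonsing n = {A \<in> carrier_mat (2*n) (2*n). transpose_mat A = - A \<and> det A \<noteq> 0}"

definition Sp :: "nat \<Rightarrow> real mat set" where
  "Sp n = {P \<in> carrier_mat (2*n) (2*n). transpose_mat P * Jsymp n * P = Jsymp n}"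

definition Pf :: "nat \<Rightarrow> real mat \<Rightarrow> real" where
  "Pf n A = (1 / (2^n * fact n)) *
     (\<Sum>\<sigma> \<in> {\<sigma>. \<sigma> permutes {0..<2*n}}.
        signof \<sigma> * (\<Prod>i<n. A $$ (\<sigma> (2*i), \<sigma> (2*i+1))))"

definition ssum :: "nat \<Rightarrow> real mat \<Rightarrow> real" where
  "ssum n A = (\<Sum>i<n. A $$ (2*i, 2*i+1))"

end

theory Submission
  imports Defs
begin


lemma prod_pairs: fixes n :: nat and f :: "nat \<Rightarrow> 'a::comm_monoid_mult" shows "(\<Prod>i<n. f (2*i) * f (2*i+1)) = (\<Prod>j<2*n. (f j :: 'a::comm_monoid_mult))"
  by (induction n) (simp_all add: mult_ac)

lemma sum_pairs: fixes n :: nat and f :: "nat \<Rightarrow> 'a::comm_monoid_add" shows "(\<Sum>i<n. f (2*i) + f (2*i+1)) = (\<Sum>j<2*n. (f j :: 'a::comm_monoid_add))"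
  by (induction n) (simp_all add: add_ac)

lemma entry_tAB:
  assumes A: "A \<in> carrier_mat N N" and B: "B \<in> carrier_mat N N" and k: "k < N" and l: "l < N"
  shows "(transpose_mat B * A * B) $$ (k,l) = (\<Sum>a<N. \<Sum>b<N. B$$(a,k) * A$$(a,b) * B$$(b,l))"
proof -
  have "transpose_mat B * A * B = transpose_mat B * (A * B)"
    using A B by (simp add: assoc_mult_mat[of _ N N _ N _ N])
  then show ?thesis
    using A B k l by (simp add: scalar_prod_def atLeast0LessThan sum_distrib_left mult.assoc)
qed

lemma expand_prod:
  fixes T :: "nat \<Rightarrow> nat \<Rightarrow> nat \<Rightarrow> 'a::comm_semiring_1"
  shows "(\<Prod>i<m. \<Sum>a<N. \<Sum>b<N. T i a b) =
    (\<Sum>f\<in>{f. (\<forall>j<2*m. f j < N) \<and> (\<forall>j. j \<ge> 2*m \<longrightarrow> f j = j)}. \<Prod>i<m. T i (f (2*i)) (f (2*i+1)))"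
proof (induction m)
  case 0
  have "{f::nat\<Rightarrow>nat. (\<forall>j<2*0. f j < N) \<and> (\<forall>j. j \<ge> 2*0 \<longrightarrow> f j = j)} = {id}"
    by (auto simp: fun_eq_iff)
  then show ?case by simp
next
  case (Suc m)
  define S where "S = {f::nat\<Rightarrow>nat. (\<forall>j<2*m. f j < N) \<and> (\<forall>j. j \<ge> 2*m \<longrightarrow> f j = j)}"
  define S' where "S' = {f::nat\<Rightarrow>nat. (\<forall>j<2*Suc m. f j < N) \<and> (\<forall>j. j \<ge> 2*Suc m \<longrightarrow> f j = j)}"
  define h where "h = (\<lambda>(f::nat\<Rightarrow>nat,a::nat,b::nat). f(2*m:=a, 2*m+1:=b))"
  have inj: "inj_on h (S \<times> {..<N} \<times> {..<N})"
  proof (rule inj_onI)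
    fix x y
    assume x: "x \<in> S \<times> {..<N} \<times> {..<N}" and y: "y \<in> S \<times> {..<N} \<times> {..<N}" and e0: "h x = h y"
    obtain f a b where xf: "x = (f,a,b)" by (cases x) auto
    obtain f' a' b' where yf: "y = (f',a',b')" by (cases y) auto
    have f: "f \<in> S" and f': "f' \<in> S" using x y xf yf by auto
    have e: "h (f,a,b) = h (f',a',b')" using e0 xf yf by simp
    have ab: "a = a'" "b = b'" using fun_cong[OF e, of "2*m"] fun_cong[OF e, of "2*m+1"]
      by (auto simp: h_def)
    have "f = f'"
    proof
      fix j
      show "f j = f' j"
      proof (cases "j = 2*m \<or> j = 2*m+1")
        case True then show ?thesis using f f' by (auto simp: S_def)
      next
        case False then show ?thesis using fun_cong[OF e, of j] by (auto simp: h_def)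
      qed
    qed
    then show "x = y" using ab xf yf by simp
  qed
  have img: "h ` (S \<times> {..<N} \<times> {..<N}) = S'"
  proof
    show "h ` (S \<times> {..<N} \<times> {..<N}) \<subseteq> S'"
      by (auto simp: h_def S_def S'_def)
  next
    show "S' \<subseteq> h ` (S \<times> {..<N} \<times> {..<N})"
    proof
      fix g assume g: "g \<in> S'"
      have "g = h (g(2*m:=2*m, 2*m+1:=2*m+1), g (2*m), g (2*m+1))"
        by (auto simp: h_def fun_eq_iff)
      moreover have "(g(2*m:=2*m, 2*m+1:=2*m+1), g (2*m), g (2*m+1)) \<in> S \<times> {..<N} \<times> {..<N}"
        using g by (auto simp: S_def S'_def)
      ultimately show "g \<in> h ` (S \<times> {..<N} \<times> {..<N})" by blast
    qed
  qed
  have "(\<Sum>g\<in>S'. \<Prod>i<Suc m. T i (g (2*i)) (g (2*i+1)))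
      = (\<Sum>x\<in>S \<times> {..<N} \<times> {..<N}. \<Prod>i<Suc m. T i (h x (2*i)) (h x (2*i+1)))"
    by (subst img[symmetric], subst sum.reindex[OF inj]) simp
  also have "\<dots> = (\<Sum>(f,a,b)\<in>S \<times> {..<N} \<times> {..<N}. (\<Prod>i<m. T i (f (2*i)) (f (2*i+1))) * T m a b)"
  proof (rule sum.cong[OF refl], clarify)
    fix f a b
    have "(\<Prod>i<m. T i (h (f,a,b) (2*i)) (h (f,a,b) (2*i+1))) = (\<Prod>i<m. T i (f (2*i)) (f (2*i+1)))"
      by (rule prod.cong) (auto simp: h_def)
    then show "(\<Prod>i<Suc m. T i (h (f,a,b) (2*i)) (h (f,a,b) (2*i+1))) = (\<Prod>i<m. T i (f (2*i)) (f (2*i+1))) * T m a b"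
      by (simp add: h_def)
  qed
  also have "\<dots> = (\<Sum>f\<in>S. \<Sum>a<N. \<Sum>b<N. (\<Prod>i<m. T i (f (2*i)) (f (2*i+1))) * T m a b)"
    by (simp add: sum.cartesian_product)
  also have "\<dots> = (\<Sum>f\<in>S. (\<Prod>i<m. T i (f (2*i)) (f (2*i+1))) * (\<Sum>a<N. \<Sum>b<N. T m a b))"
    by (simp only: sum_distrib_left)
  also have "\<dots> = (\<Sum>f\<in>S. (\<Prod>i<m. T i (f (2*i)) (f (2*i+1)))) * (\<Sum>a<N. \<Sum>b<N. T m a b)"
    by (rule sum_distrib_right[symmetric])
  finally show ?case using Suc by (simp add: S_def S'_def)
qed

definition Phi :: "nat \<Rightarrow> real mat \<Rightarrow> real" where
  "Phi n A = (\<Sum>\<sigma> \<in> {\<sigma>. \<sigma> permutes {0..<2*n}}. signof \<sigma> * (\<Prod>i<n. A $$ (\<sigma> (2*i), \<sigma> (2*i+1))))"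

lemma Pf_Phi: "Pf n A = (1 / (2^n * fact n)) * Phi n A"
  unfolding Pf_def Phi_def by simp

lemma perm_lt: fixes \<sigma> :: "nat \<Rightarrow> nat" shows "\<sigma> permutes {0..<N} \<Longrightarrow> j < N \<Longrightarrow> \<sigma> j < N"
  using permutes_in_image[of \<sigma> "{0..<N}" j] by auto

lemma Phi_congr:
  assumes A: "A \<in> carrier_mat (2*n) (2*n)" and B: "B \<in> carrier_mat (2*n) (2*n)"
  shows "Phi n (transpose_mat B * A * B) = det B * Phi n A"
proof -
  define N where "N = 2*n"
  have A': "A \<in> carrier_mat N N" and B': "B \<in> carrier_mat N N" using A B N_def by auto
  define PU where "PU = {\<sigma>. \<sigma> permutes {0..<N}}"
  define F where "F = {f::nat\<Rightarrow>nat. (\<forall>j<2*n. f j < N) \<and> (\<forall>j. j \<ge> 2*n \<longrightarrow> f j = j)}"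
  define C where "C = (\<lambda>f. mat N N (\<lambda>(j,k). B$$(f j, k)))"
  define PA where "PA = (\<lambda>f. \<Prod>i<n. A $$ (f (2*i), f (2*i+1)))"
  have PUe: "{\<sigma>. \<sigma> permutes {0..<2*n}} = PU" by (simp add: PU_def N_def)
  have step1: "(\<Prod>i<n. (transpose_mat B * A * B) $$ (\<sigma> (2*i), \<sigma> (2*i+1)))
      = (\<Sum>f\<in>F. PA f * (\<Prod>j<N. B$$(f j, \<sigma> j)))" if s: "\<sigma> \<in> PU" for \<sigma>
  proof -
    have "(\<Prod>i<n. (transpose_mat B * A * B) $$ (\<sigma> (2*i), \<sigma> (2*i+1)))
       = (\<Prod>i<n. \<Sum>a<N. \<Sum>b<N. B$$(a,\<sigma> (2*i)) * A$$(a,b) * B$$(b,\<sigma> (2*i+1)))"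
      by (rule prod.cong[OF refl], rule entry_tAB[OF A' B'], insert s, auto simp: PU_def N_def intro!: perm_lt)
    also have "\<dots> = (\<Sum>f\<in>F. \<Prod>i<n. B$$(f (2*i),\<sigma> (2*i)) * A$$(f (2*i),f (2*i+1)) * B$$(f (2*i+1),\<sigma> (2*i+1)))"
      unfolding F_def by (rule expand_prod)
    also have "\<dots> = (\<Sum>f\<in>F. PA f * (\<Prod>j<N. B$$(f j, \<sigma> j)))"
    proof (rule sum.cong[OF refl])
      fix f
      have "(\<Prod>i<n. B$$(f (2*i),\<sigma> (2*i)) * A$$(f (2*i),f (2*i+1)) * B$$(f (2*i+1),\<sigma> (2*i+1)))
         = PA f * (\<Prod>i<n. B$$(f (2*i),\<sigma> (2*i)) * B$$(f (2*i+1),\<sigma> (2*i+1)))"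
        unfolding PA_def prod.distrib[symmetric] by (rule prod.cong) (auto simp: mult_ac)
      also have "\<dots> = PA f * (\<Prod>j<N. B$$(f j, \<sigma> j))"
        unfolding N_def using prod_pairs[of "\<lambda>j. B$$(f j, \<sigma> j)" n] by simp
      finally show "(\<Prod>i<n. B$$(f (2*i),\<sigma> (2*i)) * A$$(f (2*i),f (2*i+1)) * B$$(f (2*i+1),\<sigma> (2*i+1)))
         = PA f * (\<Prod>j<N. B$$(f j, \<sigma> j))" .
    qed
    finally show ?thesis .
  qed
  have detC: "det (C f) = (\<Sum>\<sigma>\<in>PU. signof \<sigma> * (\<Prod>j<N. B$$(f j, \<sigma> j)))" if f: "f \<in> F" for f
  proof -
    have "det (C f) = (\<Sum>\<sigma>\<in>PU. signof \<sigma> * (\<Prod>j=0..<N. C f $$ (j, \<sigma> j)))"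
      unfolding PU_def by (rule det_def') (simp add: C_def)
    also have "\<dots> = (\<Sum>\<sigma>\<in>PU. signof \<sigma> * (\<Prod>j<N. B$$(f j, \<sigma> j)))"
      by (rule sum.cong[OF refl]) (auto simp: atLeast0LessThan C_def PU_def perm_lt intro!: prod.cong)
    finally show ?thesis .
  qed
  have "Phi n (transpose_mat B * A * B) = (\<Sum>\<sigma>\<in>PU. signof \<sigma> * (\<Sum>f\<in>F. PA f * (\<Prod>j<N. B$$(f j, \<sigma> j))))"
    unfolding Phi_def PUe by (rule sum.cong[OF refl]) (simp only: step1)
  also have "\<dots> = (\<Sum>f\<in>F. PA f * (\<Sum>\<sigma>\<in>PU. signof \<sigma> * (\<Prod>j<N. B$$(f j, \<sigma> j))))"
    by (simp add: sum_distrib_left sum.swap[of _ PU] mult_ac)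
  also have "\<dots> = (\<Sum>f\<in>F. PA f * det (C f))"
    by (rule sum.cong[OF refl]) (simp add: detC)
  also have "\<dots> = (\<Sum>f\<in>PU. PA f * (signof f * det B))"
  proof (rule sum.mono_neutral_cong_right)
    show "finite F"
    proof -
      have "F = {f. (\<forall>i \<in> {0..<N}. f i \<in> {0..<N}) \<and> (\<forall>i. i \<notin> {0..<N} \<longrightarrow> f i = i)}"
        by (auto simp: F_def N_def)
      then show ?thesis using finite_bounded_functions[of "{0..<N}" "{0..<N}"] by simp
    qed
    show "PU \<subseteq> F"
    proof
      fix p assume "p \<in> PU"
      then have p: "p permutes {0..<N}" by (simp add: PU_def)
      then show "p \<in> F" using perm_lt[OF p] permutes_not_in[OF p] by (auto simp: F_def N_def)
    qed
    show "\<forall>f\<in>F - PU. PA f * det (C f) = 0"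
    proof
      fix f assume that: "f \<in> F - PU"
      have fF: "f \<in> F" and fP: "\<not> f permutes {0..<N}" using that by (auto simp: PU_def)
      have "\<not> inj_on f {0..<N}"
      proof
        assume "inj_on f {0..<N}"
        from inj_on_nat_permutes[OF this] fF fP show False by (auto simp: F_def N_def)
      qed
      then obtain i j where ij: "f i = f j" "i \<noteq> j" "i < N" "j < N"
        unfolding inj_on_def by auto
      have "row (C f) i = row (C f) j" using ij by (auto simp: C_def)
      moreover have "C f \<in> carrier_mat N N" by (simp add: C_def)
      ultimately have "det (C f) = 0"
        using det_identical_rows[OF _ ij(2-4)] by blast
      then show "PA f * det (C f) = 0" by simp
    qed
    show "PA f * det (C f) = PA f * (signof f * det B)" if "f \<in> PU" for f
    proof -
      have p: "f permutes {0..<N}" using that by (simp add: PU_def)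
      show ?thesis unfolding C_def using det_permute_rows[OF B' p] by simp
    qed
  qed
  also have "\<dots> = det B * Phi n A"
    unfolding Phi_def PU_def PA_def N_def by (simp add: sum_distrib_left mult_ac)
  finally show ?thesis .
qed



lemma J_entry: "a < 2*n \<Longrightarrow> b < 2*n \<Longrightarrow> Jsymp n $$ (a,b) =
   (if even a \<and> b = a + 1 then 1 else if odd a \<and> a = b + 1 then -1 else 0)"
  by (simp add: Jsymp_def)

lemma J_skew: "a < 2*n \<Longrightarrow> b < 2*n \<Longrightarrow> Jsymp n $$ (b,a) = - Jsymp n $$ (a,b)"
  by (auto simp: J_entry)

lemma J_nz: "a < 2*n \<Longrightarrow> b < 2*n \<Longrightarrow> Jsymp n $$ (a,b) \<noteq> 0 \<Longrightarrow> a div 2 = b div 2"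
  by (auto simp: J_entry split: if_splits)

definition TJ :: "nat \<Rightarrow> (nat \<Rightarrow> nat) \<Rightarrow> real" where
  "TJ n \<sigma> = (\<Prod>i<n. Jsymp n $$ (\<sigma> (2*i), \<sigma> (2*i+1)))"

definition dbl :: "(nat \<Rightarrow> nat) \<Rightarrow> nat \<Rightarrow> nat" where
  "dbl p j = 2 * p (j div 2) + j mod 2"

definition wsw :: "nat set \<Rightarrow> nat \<Rightarrow> nat" where
  "wsw S j = (if j div 2 \<in> S then (if even j then j+1 else j-1) else j)"

lemma TJ_swap:
  assumes p: "\<rho> permutes {0..<2*n}" and k: "k < n"
  shows "TJ n (\<rho> \<circ> Transposition.transpose (2*k) (2*k+1)) = - TJ n \<rho>"
proof -
  let ?t = "Transposition.transpose (2*k) (2*k+1)"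
  let ?g = "\<lambda>\<tau> i. Jsymp n $$ (\<tau> (2*i), \<tau> (2*i+1))"
  have kk: "k \<in> {..<n}" using k by simp
  have "TJ n (\<rho> \<circ> ?t) = ?g (\<rho> \<circ> ?t) k * (\<Prod>i\<in>{..<n} - {k}. ?g (\<rho> \<circ> ?t) i)"
    unfolding TJ_def by (rule prod.remove[OF _ kk]) simp
  also have "(\<Prod>i\<in>{..<n} - {k}. ?g (\<rho> \<circ> ?t) i) = (\<Prod>i\<in>{..<n} - {k}. ?g \<rho> i)"
    by (rule prod.cong) (auto simp: Transposition.transpose_def)
  also have "?g (\<rho> \<circ> ?t) k = - ?g \<rho> k"
    using J_skew[of "\<rho> (2*k)" n "\<rho> (2*k+1)"] perm_lt[OF p] k
    by (simp add: Transposition.transpose_def)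
  also have "- ?g \<rho> k * (\<Prod>i\<in>{..<n} - {k}. ?g \<rho> i) = - TJ n \<rho>"
    unfolding TJ_def by (subst prod.remove[OF _ kk]) simp_all
  finally show ?thesis .
qed

lemma Q_swap:
  assumes p: "\<rho> permutes {0..<2*n}" and k: "k < n"
  shows "signof (\<rho> \<circ> Transposition.transpose (2*k) (2*k+1)) * TJ n (\<rho> \<circ> Transposition.transpose (2*k) (2*k+1))
     = signof \<rho> * TJ n \<rho>"
proof -
  have t: "Transposition.transpose (2*k) (2*k+1) permutes {0..<2*n}"
    using k by (intro permutes_swap_id) auto
  have "signof (\<rho> \<circ> Transposition.transpose (2*k) (2*k+1)) = (signof \<rho> :: real) * signof (Transposition.transpose (2*k) (2*k+1))"
    using signof_compose[OF p t] by simp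
  also have "signof (Transposition.transpose (2*k) (2*k+1)) = (-1::real)"
    by (simp add: sign_swap_id)
  finally have s: "(signof (\<rho> \<circ> Transposition.transpose (2*k) (2*k+1)) :: real) = - signof \<rho>" by linarith
  show ?thesis by (simp only: s TJ_swap[OF p k] mult_minus_left mult_minus_right minus_minus)
qed

lemma wsw_empty: "wsw {} = id"
  by (simp add: wsw_def fun_eq_iff)

lemma wsw_insert: "k \<notin> S \<Longrightarrow> wsw (insert k S) = wsw S \<circ> Transposition.transpose (2*k) (2*k+1)"
  by (auto simp: wsw_def fun_eq_iff Transposition.transpose_def)

lemma Qw:
  assumes "finite S" "S \<subseteq> {..<n}"
  shows "\<rho> permutes {0..<2*n} \<Longrightarrow> \<rho> \<circ> wsw S permutes {0..<2*n} \<and>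
     signof (\<rho> \<circ> wsw S) * TJ n (\<rho> \<circ> wsw S) = signof \<rho> * TJ n \<rho>"
  using assms
proof (induction S arbitrary: \<rho> rule: finite_induct)
  case empty
  then show ?case by (simp add: wsw_empty)
next
  case (insert k S)
  have k: "k < n" using insert by auto
  have IH: "\<rho> \<circ> wsw S permutes {0..<2*n}"
     "signof (\<rho> \<circ> wsw S) * TJ n (\<rho> \<circ> wsw S) = signof \<rho> * TJ n \<rho>"
    using insert.IH[of \<rho>] insert.prems by blast+
  have t: "Transposition.transpose (2*k) (2*k+1) permutes {0..<2*n}"
    using k by (intro permutes_swap_id) auto
  have e: "\<rho> \<circ> wsw (insert k S) = (\<rho> \<circ> wsw S) \<circ> Transposition.transpose (2*k) (2*k+1)"
    using insert(2) by (simp add: wsw_insert o_assoc)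
  show ?case unfolding e
    using permutes_compose[OF t IH(1)] trans[OF Q_swap[OF IH(1) k] IH(2)] by (rule conjI)
qed

lemma dbl_id: "dbl id = id"
  by (simp add: dbl_def fun_eq_iff)

lemma dbl_comp: "dbl (p \<circ> q) = dbl p \<circ> dbl q"
  by (simp add: dbl_def fun_eq_iff)

lemma dbl_transpose: "dbl (Transposition.transpose a b) =
   Transposition.transpose (2*a) (2*b) \<circ> Transposition.transpose (2*a+1) (2*b+1)"
  by (auto simp: dbl_def fun_eq_iff Transposition.transpose_def)

lemma dbl_perm:
  assumes "\<pi> permutes {0..<n}"
  shows "dbl \<pi> permutes {0..<2*n} \<and> sign (dbl \<pi>) = 1"
  using assms finite_atLeastLessThan
proof (induction rule: permutes_induct)
  case id
  have d2: "dbl (\<lambda>a. a) = id" using dbl_id by (simp add: id_def)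
  show ?case using permutes_id[unfolded id_def] by (simp add: d2 dbl_id)
next
  case (swap a b p)
  let ?t1 = "Transposition.transpose (2*a) (2*b)"
  let ?t2 = "Transposition.transpose (2*a+1) (2*b+1)"
  have t1: "?t1 permutes {0..<2*n}" and t2: "?t2 permutes {0..<2*n}"
    using swap by (auto intro!: permutes_swap_id)
  have tt: "?t1 \<circ> ?t2 permutes {0..<2*n}" using permutes_compose[OF t2 t1] .
  have pp: "permutation (dbl p)" "permutation (?t1 \<circ> ?t2)" "permutation ?t1" "permutation ?t2"
    using swap(5) tt t1 t2 by (auto simp: permutation_permutes)
  have "sign (dbl (Transposition.transpose a b \<circ> p)) = sign (?t1 \<circ> ?t2) * sign (dbl p)"
    unfolding dbl_comp dbl_transpose using sign_compose[OF pp(2) pp(1)] by simp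
  also have "sign (?t1 \<circ> ?t2) = 1"
    using sign_compose[OF pp(3) pp(4)] swap(3) by (simp add: sign_swap_id)
  finally have B0: "sign (dbl (Transposition.transpose a b \<circ> p)) = 1 * sign (dbl p)" .
  have B: "sign (dbl (Transposition.transpose a b \<circ> p)) = 1"
    using B0 swap(5) by linarith
  have A: "dbl (Transposition.transpose a b \<circ> p) permutes {0..<2*n}"
    unfolding dbl_comp dbl_transpose by (rule permutes_compose[OF swap(5)[THEN conjunct1] tt])
  show ?case using A B by (rule conjI)
qed



lemma three_div: "(x::nat) div 2 = y div 2 \<Longrightarrow> x div 2 = z div 2 \<Longrightarrow> x \<noteq> y \<Longrightarrow> x \<noteq> z \<Longrightarrow> y \<noteq> z \<Longrightarrow> False"
  using div_mult_mod_eq[of x 2] div_mult_mod_eq[of y 2] div_mult_mod_eq[of z 2]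
    mod2_eq_if[of x] mod2_eq_if[of y] mod2_eq_if[of z]
  by (auto split: if_splits)
lemma pair_odd: "odd (x::nat) \<Longrightarrow> x div 2 = y div 2 \<Longrightarrow> x \<noteq> y \<Longrightarrow> y = x - 1"
  using div_mult_mod_eq[of x 2] div_mult_mod_eq[of y 2] 
    mod2_eq_if[of x] mod2_eq_if[of y] by (auto split: if_splits)
lemma pair_even: "\<not> odd (x::nat) \<Longrightarrow> x div 2 = y div 2 \<Longrightarrow> x \<noteq> y \<Longrightarrow> y = x + 1"
  using div_mult_mod_eq[of x 2] div_mult_mod_eq[of y 2] 
    mod2_eq_if[of x] mod2_eq_if[of y] by (auto split: if_splits)

lemma TJ_dbl: assumes "\<pi> permutes {0..<n}" shows "TJ n (dbl \<pi>) = 1"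
proof -
  have "TJ n (dbl \<pi>) = (\<Prod>i<n. (1::real))"
    unfolding TJ_def
  proof (rule prod.cong[OF refl])
    fix i assume "i \<in> {..<n}"
    then have "\<pi> i < n" using perm_lt[OF assms] by simp
    then show "Jsymp n $$ (dbl \<pi> (2*i), dbl \<pi> (2*i+1)) = 1"
      by (simp add: dbl_def J_entry)
  qed
  then show ?thesis by simp
qed

lemma Q_G:
  assumes s: "\<sigma> permutes {0..<2*n}" and G: "\<forall>i<n. \<sigma> (2*i) div 2 = \<sigma> (2*i+1) div 2"
  shows "signof \<sigma> * TJ n \<sigma> = 1"
proof -
  define \<pi> where "\<pi> i = (if i < n then \<sigma> (2*i) div 2 else i)" for i
  define S where "S = {i. i < n \<and> odd (\<sigma> (2*i))}"
  have inj: "inj \<sigma>" using permutes_inj[OF s] .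
  have lt: "\<And>j. j < 2*n \<Longrightarrow> \<sigma> j < 2*n" using perm_lt[OF s] .
  have outs: "\<And>j. j \<ge> 2*n \<Longrightarrow> \<sigma> j = j" using permutes_not_in[OF s] by auto
  have pp: "\<pi> permutes {0..<n}"
  proof (rule inj_on_nat_permutes)
    show "inj_on \<pi> {0..<n}"
    proof (rule inj_onI, rule ccontr)
      fix i i' assume i: "i \<in> {0..<n}" and i': "i' \<in> {0..<n}" and e: "\<pi> i = \<pi> i'" and ne: "i \<noteq> i'"
      have n1: "2*i+1 \<noteq> 2*i'" by presburger
      have a1: "\<sigma> (2*i) \<noteq> \<sigma> (2*i+1)" "\<sigma> (2*i) \<noteq> \<sigma> (2*i')" "\<sigma> (2*i+1) \<noteq> \<sigma> (2*i')"
        using ne n1 by (simp_all add: inj_eq[OF inj])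
      have a2: "\<sigma> (2*i) div 2 = \<sigma> (2*i+1) div 2" using G i by simp
      have a3: "\<sigma> (2*i) div 2 = \<sigma> (2*i') div 2" using e i i' by (simp add: \<pi>_def)
      show False by (rule three_div[OF a2 a3 a1])
    qed
    show "\<pi> \<in> {0..<n} \<rightarrow> {0..<n}"
    proof
      fix i assume "i \<in> {0..<n}"
      then have "\<sigma> (2*i) < 2*n" using lt by simp
      then show "\<pi> i \<in> {0..<n}" using \<open>i \<in> {0..<n}\<close> by (simp add: \<pi>_def)
    qed
  qed (auto simp: \<pi>_def)
  have dec: "\<sigma> = dbl \<pi> \<circ> wsw S"
  proof
    fix j
    show "\<sigma> j = (dbl \<pi> \<circ> wsw S) j"
    proof (cases "j < 2*n")
      case False
      then show ?thesis using outs[of j] by (simp add: wsw_def S_def dbl_def \<pi>_def)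
    next
      case True
      define i where "i = j div 2"
      have i: "i < n" using True by (simp add: i_def)
      define x where "x = \<sigma> (2*i)"
      define y where "y = \<sigma> (2*i+1)"
      have xy: "x div 2 = y div 2" "x \<noteq> y" using G i inj by (auto simp: x_def y_def dest: injD)
      have pi: "\<pi> i = x div 2" using i by (simp add: \<pi>_def x_def)
      have iS: "(i \<in> S) = odd x" using i by (simp add: S_def x_def)
      have wj: "wsw S j = (if i \<in> S then (if even j then j+1 else j-1) else j)"
        by (simp add: wsw_def i_def)
      have d1: "dbl \<pi> (2*i+1) = 2 * (x div 2) + 1" using pi by (simp add: dbl_def)
      have d0: "dbl \<pi> (2*i) = 2 * (x div 2)" using pi by (simp add: dbl_def)
      have ox: "odd x \<Longrightarrow> 2 * (x div 2) + 1 = x" by presburger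
      have ex: "\<not> odd x \<Longrightarrow> 2 * (x div 2) = x" by presburger
      show ?thesis
      proof (cases "even j")
        case True
        then have j: "j = 2*i" by (simp add: i_def)
        have sx: "\<sigma> j = x" by (simp add: j x_def)
        show ?thesis
        proof (cases "odd x")
          case True
          then have "wsw S j = 2*i+1" using wj iS j by simp
          then show ?thesis using sx d1 ox True by simp
        next
          case False
          then have "wsw S j = 2*i" using wj iS j by simp
          then show ?thesis using sx d0 ex False by simp
        qed
      next
        case False
        then have j: "j = 2*i+1" by (simp add: i_def)
        have sy: "\<sigma> j = y" by (simp add: j y_def)
        show ?thesis
        proof (cases "odd x")
          case True
          then have yx: "y = x - 1" using xy pair_odd by blast
          have "wsw S j = 2*i" using wj iS j True by simp
          then show ?thesis using sy d0 yx ox True by simp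
        next
          case False
          then have yx: "y = x + 1" using xy pair_even by blast
          have "wsw S j = 2*i+1" using wj iS j False by simp
          then show ?thesis using sy d1 yx ex False by simp
        qed
      qed
    qed
  qed
  have fS: "finite S" "S \<subseteq> {..<n}" by (auto simp: S_def)
  have dp: "dbl \<pi> permutes {0..<2*n}" "sign (dbl \<pi>) = 1" using dbl_perm[OF pp] by auto
  have "signof \<sigma> * TJ n \<sigma> = signof (dbl \<pi>) * TJ n (dbl \<pi>)"
    unfolding dec using Qw[OF fS dp(1)] by blast
  also have "\<dots> = 1" using dp(2) TJ_dbl[OF pp] by simp
  finally show ?thesis .
qed

lemma Phi_J_pos: "Phi n (Jsymp n) > 0"
proof -
  define PU where "PU = {\<sigma>. \<sigma> permutes {0..<2*n}}"
  have Ph: "Phi n (Jsymp n) = (\<Sum>\<sigma>\<in>PU. signof \<sigma> * TJ n \<sigma>)"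
    unfolding Phi_def TJ_def PU_def ..
  have nonneg: "0 \<le> signof \<sigma> * TJ n \<sigma>" if "\<sigma> \<in> PU" for \<sigma>
  proof (cases "TJ n \<sigma> = 0")
    case True then show ?thesis by simp
  next
    case False
    have s: "\<sigma> permutes {0..<2*n}" using that by (simp add: PU_def)
    have "\<forall>i<n. \<sigma> (2*i) div 2 = \<sigma> (2*i+1) div 2"
    proof (intro allI impI)
      fix i assume i: "i < n"
      have "Jsymp n $$ (\<sigma> (2*i), \<sigma> (2*i+1)) \<noteq> 0"
        using False i unfolding TJ_def by (auto simp: prod_zero_iff)
      then show "\<sigma> (2*i) div 2 = \<sigma> (2*i+1) div 2"
        using J_nz[of "\<sigma> (2*i)" n "\<sigma> (2*i+1)"] perm_lt[OF s, of "2*i"] perm_lt[OF s, of "2*i+1"] i by linarith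
    qed
    then show ?thesis using Q_G[OF s] by simp
  qed
  have idt: "signof id * TJ n id = (1::real)"
    using TJ_dbl[OF permutes_id] dbl_id by simp
  have "(1::real) \<le> (\<Sum>\<sigma>\<in>PU. signof \<sigma> * TJ n \<sigma>)"
    unfolding idt[symmetric]
    by (rule member_le_sum) (auto simp: PU_def nonneg finite_permutations permutes_id[unfolded id_def])
  then show ?thesis unfolding Ph by simp
qed



lemma J_carrier: "Jsymp n \<in> carrier_mat (2*n) (2*n)"
  by (simp add: Jsymp_def)

definition pa :: "nat \<Rightarrow> nat" where "pa a = (if even a then a + 1 else a - 1)"
definition sg :: "nat \<Rightarrow> real" where "sg a = (if even a then 1 else -1)"

lemma pa_lt: "a < 2*n \<Longrightarrow> pa a < 2*n"
  unfolding pa_def by presburger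

lemma J_row: "a < 2*n \<Longrightarrow> b < 2*n \<Longrightarrow> Jsymp n $$ (a,b) = (if b = pa a then sg a else 0)"
  unfolding J_entry pa_def sg_def by (auto simp: odd_pos)

lemma J_row_sum:
  assumes a: "a < 2*n"
  shows "(\<Sum>b<2*n. Jsymp n $$ (a,b) * f b) = sg a * f (pa a)"
proof -
  have "(\<Sum>b<2*n. Jsymp n $$ (a,b) * f b) = (\<Sum>b<2*n. if b = pa a then sg a * f b else 0)"
    by (rule sum.cong[OF refl]) (simp add: J_row[OF a])
  also have "\<dots> = sg a * f (pa a)" using pa_lt[OF a] by (simp add: sum.delta')
  finally show ?thesis .
qed

lemma J_orth: "Jsymp n * transpose_mat (Jsymp n) = 1\<^sub>m (2*n)"
proof (rule eq_matI)
  fix a b assume a: "a < dim_row (1\<^sub>m (2*n))" and b: "b < dim_col (1\<^sub>m (2*n))"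
  then have a': "a < 2*n" and b': "b < 2*n" by auto
  have "(Jsymp n * transpose_mat (Jsymp n)) $$ (a,b) = (\<Sum>c<2*n. Jsymp n $$ (a,c) * Jsymp n $$ (b,c))"
    using a' b' J_carrier[of n] by (simp add: scalar_prod_def atLeast0LessThan)
  also have "\<dots> = sg a * Jsymp n $$ (b, pa a)" by (rule J_row_sum[OF a'])
  also have "\<dots> = (if a = b then 1 else 0)"
    using a' b' pa_lt[OF a'] by (auto simp: J_row sg_def pa_def odd_pos; presburger)
  finally show "(Jsymp n * transpose_mat (Jsymp n)) $$ (a,b) = 1\<^sub>m (2*n) $$ (a,b)" using a' b' by simp
qed (auto simp: Jsymp_def)

lemma Sp_det:
  assumes P: "P \<in> Sp n" shows "det P = 1"
proof -
  have Pc: "P \<in> carrier_mat (2*n) (2*n)" and PJ: "transpose_mat P * Jsymp n * P = Jsymp n"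
    using P by (auto simp: Sp_def)
  have "Phi n (Jsymp n) = det P * Phi n (Jsymp n)"
    using Phi_congr[OF J_carrier Pc] PJ by simp
  then show ?thesis using Phi_J_pos[of n] by simp
qed

lemma Sp_transpose:
  assumes P: "P \<in> Sp n" shows "P * Jsymp n * transpose_mat P = Jsymp n"
proof -
  define J where "J = Jsymp n"
  define Jn where "Jn = transpose_mat J"
  define N where "N = 2*n"
  have Pc: "P \<in> carrier_mat N N" and PJ: "transpose_mat P * J * P = J"
    using P by (auto simp: Sp_def J_def N_def)
  have Jc: "J \<in> carrier_mat N N" and Jnc: "Jn \<in> carrier_mat N N"
    using J_carrier[of n] by (auto simp: J_def Jn_def N_def)
  have Ptc: "transpose_mat P \<in> carrier_mat N N" using Pc by simp
  have JJn: "J * Jn = 1\<^sub>m N" using J_orth[of n] by (simp add: J_def Jn_def N_def)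
  have JnJ: "Jn * J = 1\<^sub>m N" by (rule mat_mult_left_right_inverse[OF Jc Jnc JJn])
  have "transpose_mat P * (J * P * Jn) = (transpose_mat P * J * P) * Jn"
    using Pc Jc Jnc by (simp add: assoc_mult_mat[of _ N N _ N _ N])
  also have "\<dots> = 1\<^sub>m N" using PJ JJn by simp
  finally have "(J * P * Jn) * transpose_mat P = 1\<^sub>m N"
    by (rule mat_mult_left_right_inverse[OF Ptc, rotated]) (use Pc Jc Jnc in simp)
  then have "Jn * ((J * P * Jn) * transpose_mat P) = Jn" using Jnc by simp
  moreover have "Jn * ((J * P * Jn) * transpose_mat P) = P * Jn * transpose_mat P"
  proof -
    have "Jn * ((J * P * Jn) * transpose_mat P) = (Jn * J) * (P * Jn * transpose_mat P)"
      using Pc Jc Jnc by (simp add: assoc_mult_mat[of _ N N _ N _ N])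
    also have "\<dots> = P * Jn * transpose_mat P" using JnJ Pc Jnc by simp
    finally show ?thesis .
  qed
  ultimately have "P * Jn * transpose_mat P = Jn" by simp
  then have "transpose_mat (P * Jn * transpose_mat P) = transpose_mat Jn" by simp
  moreover have "transpose_mat (P * Jn * transpose_mat P) = P * J * transpose_mat P"
  proof -
    have PJn: "P * Jn \<in> carrier_mat N N" using Pc Jnc by simp
    have "transpose_mat ((P * Jn) * transpose_mat P) = transpose_mat (transpose_mat P) * transpose_mat (P * Jn)"
      by (rule transpose_mult[OF PJn Ptc])
    also have "transpose_mat (P * Jn) = transpose_mat Jn * transpose_mat P"
      by (rule transpose_mult[OF Pc Jnc])
    also have "transpose_mat (transpose_mat P) * (transpose_mat Jn * transpose_mat P) = P * J * transpose_mat P"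
      using Pc Jc by (simp add: Jn_def assoc_mult_mat[of _ N N _ N _ N])
    finally show ?thesis .
  qed
  ultimately show ?thesis by (simp add: Jn_def J_def)
qed



lemma swap4: "(\<Sum>c\<in>C. \<Sum>d\<in>D. \<Sum>a\<in>A. \<Sum>b\<in>B. (f a b c d :: 'x::comm_monoid_add)) = (\<Sum>a\<in>A. \<Sum>b\<in>B. \<Sum>c\<in>C. \<Sum>d\<in>D. f a b c d)"
proof -
  have "(\<Sum>c\<in>C. \<Sum>d\<in>D. \<Sum>a\<in>A. \<Sum>b\<in>B. f a b c d) = (\<Sum>c\<in>C. \<Sum>a\<in>A. \<Sum>d\<in>D. \<Sum>b\<in>B. f a b c d)"
    by (rule sum.cong[OF refl], rule sum.swap)
  also have "\<dots> = (\<Sum>a\<in>A. \<Sum>c\<in>C. \<Sum>d\<in>D. \<Sum>b\<in>B. f a b c d)"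
    by (rule sum.swap)
  also have "\<dots> = (\<Sum>a\<in>A. \<Sum>c\<in>C. \<Sum>b\<in>B. \<Sum>d\<in>D. f a b c d)"
    by (rule sum.cong[OF refl], rule sum.cong[OF refl], rule sum.swap)
  also have "\<dots> = (\<Sum>a\<in>A. \<Sum>b\<in>B. \<Sum>c\<in>C. \<Sum>d\<in>D. f a b c d)"
    by (rule sum.cong[OF refl], rule sum.swap)
  finally show ?thesis .
qed

definition bil :: "nat \<Rightarrow> real mat \<Rightarrow> real" where
  "bil n X = (\<Sum>a<2*n. \<Sum>b<2*n. Jsymp n $$ (a,b) * X $$ (a,b))"

lemma bil_ssum:
  assumes sk: "\<And>a b. a < 2*n \<Longrightarrow> b < 2*n \<Longrightarrow> X $$ (b,a) = - X $$ (a,b)"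
  shows "bil n X = 2 * ssum n X"
proof -
  have "bil n X = (\<Sum>a<2*n. sg a * X $$ (a, pa a))"
    unfolding bil_def by (rule sum.cong[OF refl]) (rule J_row_sum, simp)
  also have "\<dots> = (\<Sum>i<n. sg (2*i) * X $$ (2*i, pa (2*i)) + sg (2*i+1) * X $$ (2*i+1, pa (2*i+1)))"
    by (rule sum_pairs[symmetric])
  also have "\<dots> = (\<Sum>i<n. 2 * X $$ (2*i, 2*i+1))"
  proof (rule sum.cong[OF refl])
    fix i assume "i \<in> {..<n}"
    then have i: "2*i < 2*n" "2*i+1 < 2*n" by auto
    show "sg (2*i) * X $$ (2*i, pa (2*i)) + sg (2*i+1) * X $$ (2*i+1, pa (2*i+1)) = 2 * X $$ (2*i, 2*i+1)"
      using sk[OF i] by (simp add: sg_def pa_def)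
  qed
  also have "\<dots> = 2 * ssum n X" by (simp add: ssum_def sum_distrib_left)
  finally show ?thesis .
qed

lemma skew_entries:
  fixes A :: "real mat"
  assumes A: "A \<in> carrier_mat N N" and sk: "transpose_mat A = - A" and a: "a < N" and b: "b < N"
  shows "A $$ (b,a) = - A $$ (a,b)"
proof -
  have "transpose_mat A $$ (a,b) = (- A) $$ (a,b)" using sk by simp
  then show ?thesis using A a b by simp
qed

lemma cong_skew:
  fixes A P :: "real mat"
  assumes A: "A \<in> carrier_mat N N" and P: "P \<in> carrier_mat N N"
    and sk: "\<And>a b. a < N \<Longrightarrow> b < N \<Longrightarrow> A $$ (b,a) = - A $$ (a,b)"
    and a: "a < N" and b: "b < N"
  shows "(transpose_mat P * A * P) $$ (b,a) = - (transpose_mat P * A * P) $$ (a,b)"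
proof -
  have "(transpose_mat P * A * P) $$ (b,a) = (\<Sum>c<N. \<Sum>d<N. P$$(c,b) * A$$(c,d) * P$$(d,a))"
    by (rule entry_tAB[OF A P b a])
  also have "\<dots> = (\<Sum>d<N. \<Sum>c<N. P$$(c,b) * A$$(c,d) * P$$(d,a))"
    by (rule sum.swap)
  also have "\<dots> = (\<Sum>d<N. \<Sum>c<N. - (P$$(d,a) * A$$(d,c) * P$$(c,b)))"
  proof (intro sum.cong refl)
    fix d c assume "d \<in> {..<N}" "c \<in> {..<N}"
    then have "A$$(c,d) = - A$$(d,c)" using sk[of d c] by simp
    then show "P$$(c,b) * A$$(c,d) * P$$(d,a) = - (P$$(d,a) * A$$(d,c) * P$$(c,b))" by (simp add: algebra_simps)
  qed
  also have "\<dots> = - (\<Sum>c<N. \<Sum>d<N. P$$(c,a) * A$$(c,d) * P$$(d,b))"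
    by (simp add: sum_negf)
  also have "\<dots> = - (transpose_mat P * A * P) $$ (a,b)"
    using entry_tAB[OF A P a b] by simp
  finally show ?thesis .
qed

lemma bil_congr:
  assumes A: "A \<in> carrier_mat (2*n) (2*n)" and P: "P \<in> Sp n"
  shows "bil n (transpose_mat P * A * P) = bil n A"
proof -
  define N where "N = 2*n"
  define J where "J = Jsymp n"
  have Pc: "P \<in> carrier_mat N N" using P by (simp add: Sp_def N_def)
  have Ac: "A \<in> carrier_mat N N" using A by (simp add: N_def)
  have Jc: "J \<in> carrier_mat N N" using J_carrier by (simp add: J_def N_def)
  have PJP: "P * J * transpose_mat P = J" using Sp_transpose[OF P] by (simp add: J_def)
  have Je: "J $$ (c,d) = (\<Sum>a<N. \<Sum>b<N. P$$(c,a) * J$$(a,b) * P$$(d,b))" if "c < N" "d < N" for c d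
  proof -
    have "J $$ (c,d) = (transpose_mat (transpose_mat P) * J * transpose_mat P) $$ (c,d)"
      using PJP by simp
    also have "\<dots> = (\<Sum>a<N. \<Sum>b<N. transpose_mat P $$(a,c) * J$$(a,b) * transpose_mat P $$(b,d))"
      by (rule entry_tAB) (use Jc Pc that in auto)
    also have "\<dots> = (\<Sum>a<N. \<Sum>b<N. P$$(c,a) * J$$(a,b) * P$$(d,b))"
      using Pc that by (intro sum.cong refl) simp
    finally show ?thesis .
  qed
  have "bil n (transpose_mat P * A * P) = (\<Sum>a<N. \<Sum>b<N. J $$ (a,b) * (\<Sum>c<N. \<Sum>d<N. P$$(c,a) * A$$(c,d) * P$$(d,b)))"
    unfolding bil_def N_def[symmetric] J_def[symmetric]
    by (intro sum.cong refl) (simp add: entry_tAB[OF Ac Pc])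
  also have "\<dots> = (\<Sum>a<N. \<Sum>b<N. \<Sum>c<N. \<Sum>d<N. J $$ (a,b) * P$$(c,a) * A$$(c,d) * P$$(d,b))"
    by (simp add: sum_distrib_left mult_ac)
  also have "\<dots> = (\<Sum>c<N. \<Sum>d<N. \<Sum>a<N. \<Sum>b<N. J $$ (a,b) * P$$(c,a) * A$$(c,d) * P$$(d,b))"
    by (rule swap4[symmetric])
  also have "\<dots> = (\<Sum>c<N. \<Sum>d<N. J $$ (c,d) * A $$ (c,d))"
  proof (intro sum.cong refl)
    fix c d assume "c \<in> {..<N}" "d \<in> {..<N}"
    then have c: "c < N" and d: "d < N" by auto
    have "(\<Sum>a<N. \<Sum>b<N. J $$ (a,b) * P$$(c,a) * A$$(c,d) * P$$(d,b))
        = A $$ (c,d) * (\<Sum>a<N. \<Sum>b<N. P$$(c,a) * J$$(a,b) * P$$(d,b))"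
      by (simp add: sum_distrib_left mult_ac)
    also have "\<dots> = A $$ (c,d) * J $$ (c,d)"
      by (subst Je[OF c d]) (rule refl)
    finally show "(\<Sum>a<N. \<Sum>b<N. J $$ (a,b) * P$$(c,a) * A$$(c,d) * P$$(d,b)) = J $$ (c,d) * A $$ (c,d)"
      by simp
  qed
  also have "\<dots> = bil n A" unfolding bil_def N_def J_def ..
  finally show ?thesis .
qed

theorem theorem2p7:
  fixes n :: nat and A P :: "real mat"
  assumes "A \<in> skew_nonsing n" and "P \<in> Sp n"
  shows "Pf n (transpose_mat P * A * P) = Pf n A \<and> ssum n (transpose_mat P * A * P) = ssum n A"
proof
  have Ac: "A \<in> carrier_mat (2*n) (2*n)" and sk: "transpose_mat A = - A"
    using assms(1) by (auto simp: skew_nonsing_def)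
  have Pc: "P \<in> carrier_mat (2*n) (2*n)" using assms(2) by (simp add: Sp_def)
  show "Pf n (transpose_mat P * A * P) = Pf n A"
    unfolding Pf_Phi Phi_congr[OF Ac Pc] Sp_det[OF assms(2)] by simp
  have skA: "\<And>a b. a < 2*n \<Longrightarrow> b < 2*n \<Longrightarrow> A $$ (b,a) = - A $$ (a,b)"
    using skew_entries[OF Ac sk] .
  have "2 * ssum n (transpose_mat P * A * P) = 2 * ssum n A"
    using bil_ssum[of n "transpose_mat P * A * P", OF cong_skew[OF Ac Pc skA]]
      bil_ssum[of n A, OF skA] bil_congr[OF Ac assms(2)] by simp
  then show "ssum n (transpose_mat P * A * P) = ssum n A" by simp
qed

end
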